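(* Let $r,n,m,k$ be positive integers and $t=2^m$. Suppose there exists an $(r,t;n,m)$-DBAC of size $k$ in which every column of every array, viewed as a cyclic binary sequence of length $r$, has least period $r$ and even Hamming weight. Then there exists an $(r,t;n+1,m)$-DBAC of size $2^m k$.
   Context: Arrays are binary and cyclic (doubly periodic); an $n\times m$ window of an $r\times t$ array $A$ at position $(p,q)$ is the matrix with entries $A_{(p+u)\bmod r,(q+v)\bmod t}$, $0\le u<n$, $0\le v<m$. An $(r,t;n,m)$-DBAC (de Bruijn array code) of size $k$ is a set of $k$ binary $r\times t$ cyclic arrays such that every binary $n\times m$ matrix appears exactly once as a window in one of the arrays. *)

theory Defs
  imports Main
begin

(* A binary r x t array is modelled as a function nat => nat => bool; only
   entries (u,v) with u<r, v<t are relevant.  Binary n x m matrices are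
   likewise functions nat => nat => bool, compared on {0..<n} x {0..<m}. *)

definition window_eq ::
  "nat \<Rightarrow> nat \<Rightarrow> (nat \<Rightarrow> nat \<Rightarrow> bool) \<Rightarrow> nat \<Rightarrow> nat \<Rightarrow> nat \<Rightarrow> nat
     \<Rightarrow> (nat \<Rightarrow> nat \<Rightarrow> bool) \<Rightarrow> bool" where
  "window_eq r t A p q n m M \<longleftrightarrow>
     (\<forall>u<n. \<forall>v<m. A ((p + u) mod r) ((q + v) mod t) = M u v)"

definition is_DBAC ::
  "nat \<Rightarrow> nat \<Rightarrow> nat \<Rightarrow> nat \<Rightarrow> nat \<Rightarrow> (nat \<Rightarrow> nat \<Rightarrow> nat \<Rightarrow> bool) \<Rightarrow> bool" where
  "is_DBAC r t n m k A \<longleftrightarrow>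
     (\<forall>M :: nat \<Rightarrow> nat \<Rightarrow> bool.
        \<exists>!w. (case w of (i, p, q) \<Rightarrow>
                i < k \<and> p < r \<and> q < t \<and> window_eq r t (A i) p q n m M))"

definition cyc_period :: "nat \<Rightarrow> (nat \<Rightarrow> bool) \<Rightarrow> nat \<Rightarrow> bool" where
  "cyc_period r c d \<longleftrightarrow> (\<forall>u<r. c ((u + d) mod r) = c u)"

definition least_period_is :: "nat \<Rightarrow> (nat \<Rightarrow> bool) \<Rightarrow> nat \<Rightarrow> bool" where
  "least_period_is r c d \<longleftrightarrow> 0 < d \<and> cyc_period r c d \<and>
     (\<forall>d'. 0 < d' \<and> d' < d \<longrightarrow> \<not> cyc_period r c d')"

definition hamming_weight :: "nat \<Rightarrow> (nat \<Rightarrow> bool) \<Rightarrow> nat" where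
  "hamming_weight r c = card {u. u < r \<and> c u}"

end

theory Submission
  imports Defs
begin

definition dlt :: "(nat \<Rightarrow> bool) \<Rightarrow> nat \<Rightarrow> bool" where
  "dlt y j = (y (Suc j) \<noteq> y j)"

fun integ :: "bool \<Rightarrow> (nat \<Rightarrow> bool) \<Rightarrow> nat \<Rightarrow> bool" where
  "integ b d 0 = b"
| "integ b d (Suc j) = (integ b d j \<noteq> d j)"

lemma dlt_integ: "dlt (integ b d) = d"
  by (rule ext) (auto simp: dlt_def)

lemma dlt_exists: "\<exists>y. (dlt ^^ m) y = (\<lambda>_. False) \<and> (\<forall>v<m. y v = w v)"
proof (induction m arbitrary: w)
  case 0
  then show ?case by auto
next
  case (Suc m)
  obtain d where d: "(dlt ^^ m) d = (\<lambda>_. False)" "\<forall>v<m. d v = (w (Suc v) \<noteq> w v)"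
    using Suc[of "\<lambda>v. (w (Suc v) \<noteq> w v)"] by blast
  have "\<forall>v<Suc m. integ (w 0) d v = w v"
  proof (intro allI impI)
    fix v assume "v < Suc m"
    then show "integ (w 0) d v = w v"
      by (induction v) (auto simp: d(2))
  qed
  moreover have "(dlt ^^ Suc m) (integ (w 0) d) = (\<lambda>_. False)"
    by (simp only: funpow_Suc_right comp_def dlt_integ d(1))
  ultimately show ?case by blast
qed

lemma dlt_pow2: "(dlt ^^ (2 ^ K)) y = (\<lambda>j. y (j + 2 ^ K) \<noteq> y j)"
proof (induction K arbitrary: y)
  case 0
  then show ?case by (auto simp: dlt_def)
next
  case (Suc K)
  have "(dlt ^^ (2 ^ Suc K)) y = (dlt ^^ (2 ^ K)) ((dlt ^^ (2 ^ K)) y)"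
    by (simp add: mult_2 funpow_add)
  also have "\<dots> = (\<lambda>j. y (j + 2 ^ Suc K) \<noteq> y j)"
    by (simp add: Suc add.assoc mult_2) (auto)
  finally show ?case .
qed

lemma dlt_zero: "(dlt ^^ t) (\<lambda>_. False) = (\<lambda>_. False)"
  by (induction t) (auto simp: dlt_def)

lemma dlt_more:
  assumes "(dlt ^^ m) y = (\<lambda>_. False)" "m \<le> l"
  shows "(dlt ^^ l) y = (\<lambda>_. False)"
proof -
  have "l = (l - m) + m" using assms(2) by simp
  then have "(dlt ^^ l) y = (dlt ^^ (l - m)) ((dlt ^^ m) y)"
    by (metis comp_apply funpow_add)
  then show ?thesis using assms(1) dlt_zero by simp
qed

lemma m_le_pow: "(m::nat) \<le> 2 ^ m"
  using less_exp[of m] by simp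

lemma dlt_period:
  assumes "(dlt ^^ m) y = (\<lambda>_. False)"
  shows "y (j + 2 ^ m) = y j"
proof -
  have "(dlt ^^ (2 ^ m)) y = (\<lambda>_. False)"
    using dlt_more[OF assms m_le_pow] .
  then show ?thesis using dlt_pow2[of m y] by (metis (full_types))
qed

lemma dlt_period_mult:
  assumes "(dlt ^^ m) y = (\<lambda>_. False)"
  shows "y (j + t * 2 ^ m) = y j"
proof (induction t)
  case 0
  then show ?case by simp
next
  case (Suc t)
  have "y (j + Suc t * 2 ^ m) = y ((j + t * 2 ^ m) + 2 ^ m)"
    by (simp add: algebra_simps)
  then show ?case using dlt_period[OF assms] Suc by simp
qed

lemma dlt_period_mod:
  assumes "(dlt ^^ m) y = (\<lambda>_. False)"
  shows "y (j mod 2 ^ m) = y j"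
proof -
  have "j = j mod 2 ^ m + (j div 2 ^ m) * 2 ^ m" using mod_div_mult_eq[of j "2 ^ m"] by simp
  then show ?thesis using dlt_period_mult[OF assms, of "j mod 2 ^ m" "j div 2 ^ m"] by simp
qed

lemma dlt_uniq:
  assumes "(dlt ^^ m) y = (\<lambda>_. False)" "(dlt ^^ m) z = (\<lambda>_. False)"
    "\<forall>v<m. y (q + v) = z (q + v)"
  shows "\<forall>t. y (q + t) = z (q + t)"
  using assms
proof (induction m arbitrary: y z)
  case 0
  then show ?case by simp
next
  case (Suc m)
  have a: "(dlt ^^ m) (dlt y) = (\<lambda>_. False)" "(dlt ^^ m) (dlt z) = (\<lambda>_. False)"
    using Suc.prems by (simp_all only: funpow_Suc_right comp_def)
  have b: "\<forall>v<m. dlt y (q + v) = dlt z (q + v)"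
  proof (intro allI impI)
    fix v assume "v < m"
    then have "y (q + v) = z (q + v)" "y (q + Suc v) = z (q + Suc v)"
      using Suc.prems(3) by auto
    then show "dlt y (q + v) = dlt z (q + v)" by (simp add: dlt_def)
  qed
  have c: "\<forall>t. dlt y (q + t) = dlt z (q + t)" using Suc.IH[OF a b] .
  have d: "y q = z q" using Suc.prems(3) by (metis add_0_right zero_less_Suc)
  show ?case
  proof
    fix t show "y (q + t) = z (q + t)"
    proof (induction t)
      case 0
      then show ?case using d by simp
    next
      case (Suc t)
      then show ?case using c[rule_format, of t] by (auto simp: dlt_def)
    qed
  qed
qed

lemma dlt_uniq_all:
  assumes "(dlt ^^ m) y = (\<lambda>_. False)" "(dlt ^^ m) z = (\<lambda>_. False)"
    "\<forall>v<m. y (q + v) = z (q + v)"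
  shows "y j = z j"
proof -
  have "q \<le> j + q * 2 ^ m"
    by (metis le_add2 le_trans mult_le_mono2 m_le_pow mult_1_right one_le_numeral one_le_power trans_le_add2)
  then obtain t where t: "j + q * 2 ^ m = q + t" by (metis le_add_diff_inverse)
  have "y j = y (j + q * 2 ^ m)" using dlt_period_mult[OF assms(1)] by simp
  also have "\<dots> = z (j + q * 2 ^ m)" using dlt_uniq[OF assms] t by simp
  also have "\<dots> = z j" using dlt_period_mult[OF assms(2)] by simp
  finally show ?thesis .
qed

lemma dlt_shift: "(dlt ^^ m) (\<lambda>j. y (j + s)) = (\<lambda>j. (dlt ^^ m) y (j + s))"
proof (induction m arbitrary: y)
  case 0
  then show ?case by simp
next
  case (Suc m)
  have "(dlt ^^ Suc m) (\<lambda>j. y (j + s)) = (dlt ^^ m) (dlt (\<lambda>j. y (j + s)))"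
    by (simp only: funpow_Suc_right comp_def)
  also have "dlt (\<lambda>j. y (j + s)) = (\<lambda>j. dlt y (j + s))"
    by (rule ext) (simp add: dlt_def)
  also have "(dlt ^^ m) (\<lambda>j. dlt y (j + s)) = (\<lambda>j. (dlt ^^ m) (dlt y) (j + s))"
    by (rule Suc.IH)
  also have "\<dots> = (\<lambda>j. (dlt ^^ Suc m) y (j + s))"
    by (simp only: funpow_Suc_right comp_def)
  finally show ?case .
qed

definition bt :: "nat \<Rightarrow> nat \<Rightarrow> bool" where
  "bt a v = odd (a div 2 ^ v)"

lemma bt_Suc: "bt a (Suc v) = bt (a div 2) v"
  by (simp add: bt_def div_mult2_eq)

lemma bt_0: "bt a 0 = odd a"
  by (simp add: bt_def)

lemma bits_exists: "\<exists>a. a < 2 ^ m \<and> (\<forall>v<m. bt a v = w v)"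
proof (induction m arbitrary: w)
  case 0
  then show ?case by auto
next
  case (Suc m)
  obtain a where a: "a < 2 ^ m" "\<forall>v<m. bt a v = w (Suc v)"
    using Suc[of "\<lambda>v. w (Suc v)"] by blast
  define b where "b = (if w 0 then 1 else 0) + 2 * a"
  have "b < 2 ^ Suc m" using a(1) by (simp add: b_def)
  moreover have "\<forall>v<Suc m. bt b v = w v"
  proof (intro allI impI)
    fix v assume v: "v < Suc m"
    show "bt b v = w v"
    proof (cases v)
      case 0
      then show ?thesis by (simp add: bt_0 b_def)
    next
      case (Suc v')
      have "b div 2 = a" by (simp add: b_def)
      then show ?thesis using Suc v a(2) by (simp add: bt_Suc)
    qed
  qed
  ultimately show ?case by blast
qed

lemma bits_uniq: "a < 2 ^ m \<Longrightarrow> b < 2 ^ m \<Longrightarrow> \<forall>v<m. bt a v = bt b v \<Longrightarrow> a = b"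
proof (induction m arbitrary: a b)
  case 0
  then show ?case by simp
next
  case (Suc m)
  have "a div 2 = b div 2"
    using Suc.prems by (intro Suc.IH) (auto simp: bt_Suc[symmetric])
  moreover have "odd a = odd b" using Suc.prems(3) by (metis bt_0 zero_less_Suc)
  ultimately show ?case
    by (metis div_mult_mod_eq odd_iff_mod_2_eq_one mod2_eq_if)
qed

definition Yseq :: "nat \<Rightarrow> nat \<Rightarrow> nat \<Rightarrow> bool" where
  "Yseq m a = (SOME y. (dlt ^^ m) y = (\<lambda>_. False) \<and> (\<forall>v<m. y v = bt a v))"

lemma Yseq_prop: "(dlt ^^ m) (Yseq m a) = (\<lambda>_. False) \<and> (\<forall>v<m. Yseq m a v = bt a v)"
  unfolding Yseq_def by (rule someI_ex[OF dlt_exists])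

lemma Yseq_ex1: "\<exists>!a. a < 2 ^ m \<and> (\<forall>v<m. Yseq m a (q + v) = w v)"
proof -
  obtain z where z: "(dlt ^^ m) z = (\<lambda>_. False)" "\<forall>v<m. z v = w v"
    using dlt_exists by blast
  define s where "s = 2 ^ m - q mod 2 ^ m"
  define y where "y = (\<lambda>j. z (j + s))"
  have ydlt: "(dlt ^^ m) y = (\<lambda>_. False)"
    unfolding y_def dlt_shift z(1) by simp
  have qs: "q + s = (q div 2 ^ m + 1) * 2 ^ m"
  proof -
    have h1: "q mod 2 ^ m < (2::nat) ^ m" by simp
    have h2: "q div 2 ^ m * 2 ^ m + q mod 2 ^ m = q" by (rule div_mult_mod_eq)
    have "(q div 2 ^ m + 1) * 2 ^ m = q div 2 ^ m * 2 ^ m + 2 ^ m" by simp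
    then show ?thesis unfolding s_def using h1 h2 by linarith
  qed
  have yw: "\<forall>v<m. y (q + v) = w v"
  proof (intro allI impI)
    fix v assume "v < m"
    have "q + v + s = v + (q div 2 ^ m + 1) * 2 ^ m" using qs by simp
    then have "y (q + v) = z (v + (q div 2 ^ m + 1) * 2 ^ m)"
      unfolding y_def by metis
    also have "\<dots> = z v" by (rule dlt_period_mult[OF z(1)])
    finally show "y (q + v) = w v" using z(2) \<open>v < m\<close> by simp
  qed
  obtain a where a: "a < 2 ^ m" "\<forall>v<m. bt a v = y v" using bits_exists by blast
  have "\<forall>v<m. Yseq m a (0 + v) = y (0 + v)" using a(2) Yseq_prop by simp
  then have eq: "\<And>j. Yseq m a j = y j"
    using dlt_uniq_all[OF conjunct1[OF Yseq_prop] ydlt] by blast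
  show ?thesis
  proof (rule ex1I[of _ a])
    show "a < 2 ^ m \<and> (\<forall>v<m. Yseq m a (q + v) = w v)" using a(1) eq yw by simp
  next
    fix b assume b: "b < 2 ^ m \<and> (\<forall>v<m. Yseq m b (q + v) = w v)"
    then have "\<forall>v<m. Yseq m b (q + v) = Yseq m a (q + v)" using eq yw by simp
    then have "\<And>j. Yseq m b j = Yseq m a j"
      using dlt_uniq_all[OF conjunct1[OF Yseq_prop] conjunct1[OF Yseq_prop]] by blast
    then have "\<forall>v<m. bt b v = bt a v" using Yseq_prop by metis
    then show "b = a" using bits_uniq b a(1) by blast
  qed
qed


lemma integ_card: "integ False d n = odd (card {u. u < n \<and> d u})"
proof (induction n)
  case 0
  then show ?case by simp
next
  case (Suc n)
  have fin: "finite {u. u < n \<and> d u}" by simp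
  show ?case
  proof (cases "d n")
    case True
    then have "{u. u < Suc n \<and> d u} = insert n {u. u < n \<and> d u}" by auto
    then have "card {u. u < Suc n \<and> d u} = Suc (card {u. u < n \<and> d u})"
      using fin by simp
    then show ?thesis using Suc True by simp
  next
    case False
    then have "{u. u < Suc n \<and> d u} = {u. u < n \<and> d u}" using less_Suc_eq by auto
    then show ?thesis using Suc False by simp
  qed
qed

lemma diff_char:
  fixes f g :: "nat \<Rightarrow> bool"
  shows "(\<forall>u<Suc n. f u = g u) \<longleftrightarrow>
     (f 0 = g 0 \<and> (\<forall>u<n. (f (Suc u) \<noteq> f u) = (g (Suc u) \<noteq> g u)))"
proof (induction n)
  case 0
  then show ?case by simp
next
  case (Suc n)
  show ?case
  proof
    assume h: "\<forall>u<Suc (Suc n). f u = g u"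
    show "f 0 = g 0 \<and> (\<forall>u<Suc n. (f (Suc u) \<noteq> f u) = (g (Suc u) \<noteq> g u))"
    proof (intro conjI allI impI)
      show "f 0 = g 0" using h by simp
    next
      fix u assume "u < Suc n"
      then have "f u = g u" "f (Suc u) = g (Suc u)" using h by simp_all
      then show "(f (Suc u) \<noteq> f u) = (g (Suc u) \<noteq> g u)" by simp
    qed
  next
    assume h: "f 0 = g 0 \<and> (\<forall>u<Suc n. (f (Suc u) \<noteq> f u) = (g (Suc u) \<noteq> g u))"
    then have "f 0 = g 0 \<and> (\<forall>u<n. (f (Suc u) \<noteq> f u) = (g (Suc u) \<noteq> g u))" by simp
    then have a: "\<forall>u<Suc n. f u = g u" using Suc.IH by blast
    have "f n = g n" using a by simp
    moreover have "(f (Suc n) \<noteq> f n) = (g (Suc n) \<noteq> g n)" using h by simp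
    ultimately have "f (Suc n) = g (Suc n)" by (cases "f (Suc n)"; cases "g (Suc n)") auto
    then show "\<forall>u<Suc (Suc n). f u = g u" using a less_Suc_eq by auto
  qed
qed

theorem theorem10:
  fixes r n m k :: nat and A :: "nat \<Rightarrow> nat \<Rightarrow> nat \<Rightarrow> bool"
  assumes "0 < r" "0 < n" "0 < m" "0 < k"
    and "is_DBAC r (2 ^ m) n m k A"
    and "\<forall>i<k. \<forall>j<2 ^ m. least_period_is r (\<lambda>u. A i u j) r
                        \<and> even (hamming_weight r (\<lambda>u. A i u j))"
  shows "\<exists>B :: nat \<Rightarrow> nat \<Rightarrow> nat \<Rightarrow> bool. is_DBAC r (2 ^ m) (Suc n) m (2 ^ m * k) B"
proof -
  define N :: nat where "N = 2 ^ m"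
  define s where "s i j u = integ False (\<lambda>u. A i u j) u" for i j u
  define B where "B I u j = (s (I mod k) j u \<noteq> Yseq m (I div k) j)" for I u j
  define Dm :: "(nat \<Rightarrow> nat \<Rightarrow> bool) \<Rightarrow> nat \<Rightarrow> nat \<Rightarrow> bool"
    where "Dm M u v = (M (Suc u) v \<noteq> M u v)" for M u v
  have F1: "(s i j (Suc u mod r) \<noteq> s i j u) = A i u j" if "i < k" "j < N" "u < r" for i j u
  proof (cases "Suc u < r")
    case True
    then show ?thesis by (auto simp add: s_def)
  next
    case False
    then have u: "Suc u = r" using that(3) by simp
    have "even (hamming_weight r (\<lambda>u. A i u j))" using assms(6) that(1,2) N_def by simp
    then have "s i j r = False"
      unfolding s_def integ_card hamming_weight_def by simp
    then show ?thesis using u by (simp add: s_def) (metis integ.simps(2))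
  qed
  have W: "window_eq r N (B I) p q (Suc n) m M \<longleftrightarrow>
      window_eq r N (A (I mod k)) p q n m (Dm M) \<and>
      (\<forall>v<m. Yseq m (I div k) (q + v) = (M 0 v \<noteq> s (I mod k) ((q + v) mod N) p))"
    if "p < r" for I p q M
  proof -
    have k: "I mod k < k" using assms(4) by simp
    have col: "(\<forall>u<Suc n. B I ((p + u) mod r) ((q + v) mod N) = M u v) \<longleftrightarrow>
       (\<forall>u<n. A (I mod k) ((p + u) mod r) ((q + v) mod N) = Dm M u v) \<and>
       Yseq m (I div k) (q + v) = (M 0 v \<noteq> s (I mod k) ((q + v) mod N) p)" for v
    proof -
      let ?j = "(q + v) mod N"
      have j: "?j < N" by (simp add: N_def)
      have d: "(B I ((p + Suc u) mod r) ?j \<noteq> B I ((p + u) mod r) ?j)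
           = A (I mod k) ((p + u) mod r) ?j" for u
      proof -
        have "(p + Suc u) mod r = Suc ((p + u) mod r) mod r" by (simp add: mod_Suc_eq)
        moreover have "(p + u) mod r < r" using assms(1) by simp
        ultimately show ?thesis using F1[OF k j] unfolding B_def by auto
      qed
      have y: "Yseq m (I div k) ?j = Yseq m (I div k) (q + v)"
        using dlt_period_mod[OF conjunct1[OF Yseq_prop]] N_def by simp
      have b0: "B I ((p + 0) mod r) ?j = (s (I mod k) ?j p \<noteq> Yseq m (I div k) (q + v))"
        using that y unfolding B_def by simp
      show ?thesis
        unfolding diff_char[of n "\<lambda>u. B I ((p + u) mod r) ?j" "\<lambda>u. M u v"] d b0 Dm_def
        by auto
    qed
    show ?thesis unfolding window_eq_def using col by blast
  qed
  have "is_DBAC r N (Suc n) m (N * k) B"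
    unfolding is_DBAC_def
  proof
    fix M :: "nat \<Rightarrow> nat \<Rightarrow> bool"
    define P where "P w = (case w of (i, p, q) \<Rightarrow> i < k \<and> p < r \<and> q < N \<and> window_eq r N (A i) p q n m (Dm M))" for w
    have ex: "\<exists>!w. P w" using assms(5) unfolding is_DBAC_def N_def P_def by blast
    then obtain w0 where Pw: "P w0" and uw: "\<And>w'. P w' \<Longrightarrow> w' = w0" by blast
    obtain i p q where w0: "w0 = (i, p, q)" by (cases w0) auto
    have ipq: "i < k" "p < r" "q < N" "window_eq r N (A i) p q n m (Dm M)"
      using Pw unfolding w0 P_def by auto
    have un: "(i', p', q') = (i, p, q)" if "i' < k" "p' < r" "q' < N"
          "window_eq r N (A i') p' q' n m (Dm M)" for i' p' q'
      using uw[of "(i', p', q')"] that unfolding w0 P_def by auto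
    obtain a where a: "a < N" "\<forall>v<m. Yseq m a (q + v) = (M 0 v \<noteq> s i ((q + v) mod N) p)"
      and aun: "\<And>b. b < N \<Longrightarrow> \<forall>v<m. Yseq m b (q + v) = (M 0 v \<noteq> s i ((q + v) mod N) p) \<Longrightarrow> b = a"
      using Yseq_ex1[of m q "\<lambda>v. (M 0 v \<noteq> s i ((q + v) mod N) p)"] unfolding N_def by blast
    define I where "I = i + k * a"
    have Imod: "I mod k = i" "I div k = a" using ipq(1) unfolding I_def by auto
    have IN: "I < N * k"
    proof -
      have "i + k * a < k + k * a" using ipq(1) by simp
      also have "\<dots> = k * (a + 1)" by simp
      also have "\<dots> \<le> k * N" using a(1) mult_le_mono2[of "a + 1" N k] by simp
      finally show ?thesis unfolding I_def by (simp add: mult.commute)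
    qed
    show "\<exists>!w. case w of (I, p, q) \<Rightarrow> I < N * k \<and> p < r \<and> q < N \<and> window_eq r N (B I) p q (Suc n) m M"
    proof (rule ex1I[of _ "(I, p, q)"])
      show "case (I, p, q) of (I, p, q) \<Rightarrow> I < N * k \<and> p < r \<and> q < N \<and> window_eq r N (B I) p q (Suc n) m M"
        using IN ipq a Imod W[OF ipq(2)] by simp
    next
      fix w assume "case w of (I, p, q) \<Rightarrow> I < N * k \<and> p < r \<and> q < N \<and> window_eq r N (B I) p q (Suc n) m M"
      then obtain I' p' q' where w: "w = (I', p', q')" "I' < N * k" "p' < r" "q' < N"
          "window_eq r N (B I') p' q' (Suc n) m M"
        by (cases w) auto
      have W': "window_eq r N (A (I' mod k)) p' q' n m (Dm M)"
        "\<forall>v<m. Yseq m (I' div k) (q' + v) = (M 0 v \<noteq> s (I' mod k) ((q' + v) mod N) p')"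
        using W[OF w(3)] w(5) by auto
      have "I' mod k < k" using assms(4) by simp
      then have e: "I' mod k = i" "p' = p" "q' = q" using un[OF _ w(3,4) W'(1)] by auto
      have "I' div k < N" using w(2) by (metis less_mult_imp_div_less)
      then have "I' div k = a" using aun W'(2) e by simp
      then have "I' = I" using e(1) unfolding I_def by (metis div_mult_mod_eq add.commute mult.commute)
      then show "w = (I, p, q)" using w(1) e by simp
    qed
  qed
  then show ?thesis unfolding N_def by (metis mult.commute)
qed

end
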